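(* Let $H$ be a real Hilbert space, let $D\subseteq H$ be a nonempty closed convex set, let $I$ be a countable set of positive integers, and let $(T_i)_{i\in I}$ be firmly nonexpansive operators $T_i:D\to D$ with $F:=\bigcap_{i\in I}\mathrm{Fix}(T_i)\neq\emptyset$. Let $(\Omega,w)\in\mathcal{M}_\infty$, let $(\lambda_k)_{k\in\mathbb{N}}$ be a steering sequence, and let $u,x^0\in D$. Then the sequence defined by $$x^{k+1}=\lambda_k u+(1-\lambda_k)\sum_{t\in\Omega}w(t)T[t](x^k),\quad k\ge0,$$ is well defined and converges strongly to $P_F(u)$.
   Context: An operator $T:D\to H$ is firmly nonexpansive if $\|T(x)-T(y)\|^2\le\langle x-y,T(x)-T(y)\rangle$ for all $x,y\in D$. $\mathrm{Fix}(T)=\{x\in D:T(x)=x\}$; $P_F$ is the metric projection onto $F$. An index vector is a finite tuple $t=(t_1,\dots,t_q)$ with each $t_\ell\in I$; the string operator is $T[t]:=T_{t_q}T_{t_{q-1}}\cdots T_{t_1}$. A countable set $\Omega$ of index vectors is fit if every $i\in I$ appears as a component of some $t\in\Omega$. $\mathcal{M}_\infty$ denotes the collection of all pairs $(\Omega,w)$ where $\Omega$ is a fit countable set of index vectors and $w:\Omega\to(0,1)$ satisfies $\sum_{t\in\Omega}w(t)=1$. A steering sequence is a real sequence $(\lambda_k)_{k\in\mathbb{N}}$ with $\lambda_k\in[0,1]$ for all $k$, $\lim_{k\to\infty}\lambda_k=0$, $\sum_{k=0}^\infty\lambda_k=+\infty$, and $\sum_{k=0}^\infty|\lambda_{k+1}-\lambda_k|<\infty$.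 *)

theory Defs
  imports "HOL-Analysis.Analysis"
begin

definition firmly_nonexpansive_on :: "'a::real_inner set \<Rightarrow> ('a \<Rightarrow> 'a) \<Rightarrow> bool" where
  "firmly_nonexpansive_on D T \<longleftrightarrow>
     (\<forall>x\<in>D. \<forall>y\<in>D. (norm (T x - T y))\<^sup>2 \<le> inner (x - y) (T x - T y))"

definition Fix_on :: "'a set \<Rightarrow> ('a \<Rightarrow> 'a) \<Rightarrow> 'a set" where
  "Fix_on D T = {x\<in>D. T x = x}"

text \<open>Metric projection onto F (the unique nearest point, when it exists).\<close>
definition metric_proj :: "'a::real_normed_vector set \<Rightarrow> 'a \<Rightarrow> 'a" where
  "metric_proj F u = (THE p. p \<in> F \<and> (\<forall>y\<in>F. norm (u - p) \<le> norm (u - y)))"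

text \<open>String operator: for t = [t_1,...,t_q], string_op T t = T t_q o ... o T t_1.\<close>
definition string_op :: "(nat \<Rightarrow> 'a \<Rightarrow> 'a) \<Rightarrow> nat list \<Rightarrow> 'a \<Rightarrow> 'a" where
  "string_op T t = fold T t"

definition fit :: "nat set \<Rightarrow> nat list set \<Rightarrow> bool" where
  "fit I \<Omega> \<longleftrightarrow> countable \<Omega> \<and> (\<forall>t\<in>\<Omega>. t \<noteq> [] \<and> set t \<subseteq> I) \<and> (\<forall>i\<in>I. \<exists>t\<in>\<Omega>. i \<in> set t)"

definition M_infty :: "nat set \<Rightarrow> nat list set \<Rightarrow> (nat list \<Rightarrow> real) \<Rightarrow> bool" where
  "M_infty I \<Omega> w \<longleftrightarrow> fit I \<Omega> \<and> (\<forall>t\<in>\<Omega>. 0 < w t \<and> w t < 1) \<and> (w has_sum 1) \<Omega>"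

definition steering_seq :: "(nat \<Rightarrow> real) \<Rightarrow> bool" where
  "steering_seq lam \<longleftrightarrow> (\<forall>k. 0 \<le> lam k \<and> lam k \<le> 1) \<and> lam \<longlonglongrightarrow> 0
     \<and> \<not> summable lam \<and> summable (\<lambda>k. \<bar>lam (Suc k) - lam k\<bar>)"

end

theory Submission
  imports Defs
begin
lemma nonneg_not_summable_unbounded:
  fixes g :: "nat \<Rightarrow> real"
  assumes "\<And>k. 0 \<le> g k" "\<not> summable g"
  shows "\<exists>m. X \<le> sum g {..<m}"
proof (rule ccontr)
  assume "\<not> ?thesis"
  hence "\<And>m. sum g {..<m} \<le> X" by (meson linorder_le_cases)
  hence "summable g" using summableI_nonneg_bounded[of g X] assms(1) by blast
  thus False using assms(2) by blast
qed

lemma halpern_seq_lemma: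
  fixes a \<gamma> \<beta> b :: "nat \<Rightarrow> real"
  assumes a0: "\<And>k. 0 \<le> a k" and g01: "\<And>k. 0 \<le> \<gamma> k \<and> \<gamma> k \<le> 1" and gns: "\<not> summable \<gamma>"
    and b0: "\<And>k. 0 \<le> b k" and bs: "summable b"
    and beta: "\<And>\<epsilon>. \<epsilon> > 0 \<Longrightarrow> eventually (\<lambda>k. \<beta> k \<le> \<epsilon>) sequentially"
    and rec: "\<And>k. a (Suc k) \<le> (1 - \<gamma> k) * a k + \<gamma> k * \<beta> k + b k"
  shows "a \<longlonglongrightarrow> 0"
proof (rule LIMSEQ_I)
  fix r :: real assume r: "0 < r"
  define \<epsilon> where "\<epsilon> = r / 4"
  have e: "\<epsilon> > 0" using r by (simp add: \<epsilon>_def)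
  obtain N1 where N1: "\<And>k. k \<ge> N1 \<Longrightarrow> \<beta> k \<le> \<epsilon>"
    using beta[OF e] unfolding eventually_sequentially by blast
  obtain N2 where N2: "\<And>n. n \<ge> N2 \<Longrightarrow> norm (\<Sum>i. b (i + n)) < \<epsilon>"
    using suminf_exist_split[OF e bs] by blast
  define N where "N = max N1 N2"
  have step: "a (Suc k) - \<epsilon> \<le> (1 - \<gamma> k) * (a k - \<epsilon>) + b k" if "k \<ge> N" for k
  proof -
    have "\<gamma> k * \<beta> k \<le> \<gamma> k * \<epsilon>" using N1[of k] that g01[of k] unfolding N_def
      by (simp add: mult_left_mono)
    thus ?thesis using rec[of k] by (simp add: algebra_simps)
  qed
  define P where "P m = (\<Prod>i<m. 1 - \<gamma> (N + i))" for m
  have P0: "0 \<le> P m" for m unfolding P_def using g01 by (intro prod_nonneg) auto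
  have claim: "a (N + m) - \<epsilon> \<le> P m * a N + (\<Sum>i<m. b (N + i))" for m
  proof (induction m)
    case 0
    then show ?case using e by (simp add: P_def)
  next
    case (Suc m)
    have s0: "0 \<le> (\<Sum>i<m. b (N + i))" using b0 by (simp add: sum_nonneg)
    have g: "0 \<le> 1 - \<gamma> (N + m)" "1 - \<gamma> (N + m) \<le> 1" using g01[of "N+m"] by auto
    have "a (N + Suc m) - \<epsilon> \<le> (1 - \<gamma> (N+m)) * (a (N+m) - \<epsilon>) + b (N+m)"
      using step[of "N+m"] by simp
    also have "\<dots> \<le> (1 - \<gamma> (N+m)) * (P m * a N + (\<Sum>i<m. b (N + i))) + b (N+m)"
      using Suc.IH g by (simp add: mult_left_mono)
    also have "\<dots> = P (Suc m) * a N + (1 - \<gamma> (N+m)) * (\<Sum>i<m. b (N + i)) + b (N+m)"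
      by (simp add: P_def algebra_simps)
    also have "\<dots> \<le> P (Suc m) * a N + (\<Sum>i<m. b (N + i)) + b (N+m)"
      using g s0 by (simp add: mult_left_le_one_le)
    finally show ?case by simp
  qed
  have bsum: "(\<Sum>i<m. b (N + i)) \<le> \<epsilon>" for m
  proof -
    have sN: "summable (\<lambda>i. b (i + N))" using bs by (simp add: summable_iff_shift)
    have "(\<Sum>i<m. b (N + i)) = (\<Sum>i<m. b (i + N))" by (simp add: add.commute)
    also have "\<dots> \<le> (\<Sum>i. b (i + N))"
      using sum_le_suminf[OF sN, of "{..<m}"] b0 by simp
    also have "\<dots> \<le> \<epsilon>" using N2[of N] unfolding N_def by simp
    finally show ?thesis .
  qed
  have gshift: "\<not> summable (\<lambda>i. \<gamma> (N + i))"
    using gns summable_iff_shift[of \<gamma> N] by (simp add: add.commute)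
  obtain m0 where m0: "a N / \<epsilon> \<le> (\<Sum>i<m0. \<gamma> (N + i))"
    using nonneg_not_summable_unbounded[OF _ gshift] g01 by blast
  have Pexp: "P m \<le> exp (- (\<Sum>i<m. \<gamma> (N + i)))" for m
  proof -
    have "P m \<le> (\<Prod>i<m. exp (- \<gamma> (N + i)))" unfolding P_def
      using g01 by (intro prod_mono) (auto simp: exp_ge_add_one_self[of "- \<gamma> _", simplified])
    also have "\<dots> = exp (- (\<Sum>i<m. \<gamma> (N + i)))"
      by (simp add: exp_sum[symmetric] sum_negf)
    finally show ?thesis .
  qed
  have Pm: "P m * a N \<le> \<epsilon>" if "m \<ge> m0" for m
  proof -
    define S where "S = (\<Sum>i<m. \<gamma> (N + i))"
    have "(\<Sum>i<m0. \<gamma> (N + i)) \<le> S" unfolding S_def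
      using that g01 by (intro sum_mono2) auto
    moreover have "a N \<le> \<epsilon> * (\<Sum>i<m0. \<gamma> (N + i))" using m0 e by (simp add: field_simps)
    ultimately have S1: "a N \<le> \<epsilon> * S" using e
      by (meson less_imp_le mult_left_mono order_trans)
    have S0: "0 \<le> S" unfolding S_def using g01 by (simp add: sum_nonneg)
    have "exp (-S) * (1 + S) \<le> 1"
    proof -
      have "1 + S \<le> exp S" by (rule exp_ge_add_one_self)
      hence "exp (-S) * (1 + S) \<le> exp (-S) * exp S" by (simp add: mult_left_mono)
      thus ?thesis by (simp add: exp_minus field_simps)
    qed
    have "P m * a N \<le> exp (-S) * (\<epsilon> * S)"
      using Pexp[of m] S1 P0[of m] a0[of N] unfolding S_def[symmetric]
      by (meson mult_mono exp_ge_zero)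
    also have "\<dots> \<le> exp (-S) * (\<epsilon> * (1 + S))" using e by (simp add: mult_left_mono)
    also have "\<dots> = \<epsilon> * (exp (-S) * (1 + S))" by simp
    also have "\<dots> \<le> \<epsilon>" using \<open>exp (-S) * (1 + S) \<le> 1\<close> e by simp
    finally show ?thesis .
  qed
  show "\<exists>no. \<forall>n\<ge>no. norm (a n - 0) < r"
  proof (intro exI allI impI)
    fix n assume n: "n \<ge> N + m0"
    define m where "m = n - N"
    have nm: "n = N + m" "m \<ge> m0" using n unfolding m_def by auto
    have "a n \<le> 3 * \<epsilon>" using claim[of m] Pm[OF nm(2)] bsum[of m] nm(1) by simp
    thus "norm (a n - 0) < r" using a0[of n] e unfolding \<epsilon>_def by simp
  qed
qed

lemma nsq_add: "(norm (a + b))^2 = (norm a)^2 + 2 * inner a b + (norm (b::'a::real_inner))^2"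
  by (simp add: power2_norm_eq_inner inner_add_left inner_add_right inner_commute)

lemma nsq_diff: "(norm (a - b))^2 = (norm a)^2 - 2 * inner a b + (norm (b::'a::real_inner))^2"
  by (simp add: power2_norm_eq_inner inner_diff_left inner_diff_right inner_commute)

lemma nonexp_monotone:
  fixes S :: "'a::real_inner \<Rightarrow> 'a"
  assumes "norm (S x - S y) \<le> norm (x - y)"
  shows "0 \<le> inner ((x - S x) - (y - S y)) (x - y)"
proof -
  have "inner (S x - S y) (x - y) \<le> norm (S x - S y) * norm (x - y)" by (rule norm_cauchy_schwarz)
  also have "\<dots> \<le> norm (x - y) * norm (x - y)" using assms by (simp add: mult_right_mono)
  finally have "inner (S x - S y) (x - y) \<le> inner (x - y) (x - y)" by (simp add: dot_square_norm power2_eq_square)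
  moreover have "inner ((x - S x) - (y - S y)) (x - y) = inner (x - y) (x - y) - inner (S x - S y) (x - y)"
    by (simp add: algebra_simps inner_diff_left inner_diff_right)
  ultimately show ?thesis by simp
qed

lemma path_limit:
  fixes D :: "'a::{real_inner,complete_space} set" and S :: "'a \<Rightarrow> 'a"
  assumes clD: "closed D" and cvD: "convex D" and SD: "S ` D \<subseteq> D"
    and ne: "\<And>x y. x \<in> D \<Longrightarrow> y \<in> D \<Longrightarrow> norm (S x - S y) \<le> norm (x - y)"
    and q0: "q0 \<in> D" "S q0 = q0" and uD: "u \<in> D"
  shows "\<exists>zs z. (\<forall>n. zs n \<in> D \<and> zs n = (1 / (real n + 2)) *\<^sub>R u + ((real n + 1) / (real n + 2)) *\<^sub>R S (zs n))
     \<and> zs \<longlonglongrightarrow> z \<and> z \<in> D \<and> S z = z \<and> (\<forall>q\<in>D. S q = q \<longrightarrow> 0 \<le> inner (u - z) (z - q)) \<and> (\<forall>n. norm (zs n - q0) \<le> norm (u - q0))"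
proof -
  define f where "f n x = (1 / (real n + 2)) *\<^sub>R u + ((real n + 1) / (real n + 2)) *\<^sub>R S x" for n x
  have ex: "\<exists>z\<in>D. f n z = z" for n
  proof -
    have "\<exists>!z\<in>D. f n z = z"
    proof (rule Banach_fix)
      show "complete D" using clD by (simp add: complete_eq_closed)
      show "D \<noteq> {}" using q0 by auto
      show "0 \<le> (real n + 1) / (real n + 2)" by simp
      show "(real n + 1) / (real n + 2) < 1" by simp
      show "f n ` D \<subseteq> D"
      proof
        fix y assume "y \<in> f n ` D"
        then obtain x where x: "x \<in> D" "y = f n x" by auto
        have "S x \<in> D" using SD x by auto
        thus "y \<in> D" unfolding x f_def
          by (rule convexD[OF cvD uD]) (auto simp: field_simps)
      qed
      fix x y assume "x \<in> D" "y \<in> D"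
      have "f n x - f n y = ((real n + 1) / (real n + 2)) *\<^sub>R (S x - S y)"
        unfolding f_def by (simp add: algebra_simps)
      hence "dist (f n x) (f n y) = ((real n + 1) / (real n + 2)) * norm (S x - S y)"
        by (simp add: dist_norm)
      also have "\<dots> \<le> ((real n + 1) / (real n + 2)) * dist x y"
        unfolding dist_norm by (rule mult_left_mono[OF ne[OF \<open>x \<in> D\<close> \<open>y \<in> D\<close>]]) simp
      finally show "dist (f n x) (f n y) \<le> ((real n + 1) / (real n + 2)) * dist x y" .
    qed
    thus ?thesis by blast
  qed
  hence "\<forall>n. \<exists>z. z \<in> D \<and> f n z = z" by blast
  from choice[OF this] obtain zs where zs': "\<forall>n. zs n \<in> D \<and> f n (zs n) = zs n" by blast
  hence zs: "\<And>n. zs n \<in> D" "\<And>n. f n (zs n) = zs n" by auto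
  have key: "(real n + 1) *\<^sub>R (zs n - S (zs n)) = u - zs n" for n
  proof -
    have "(real n + 2) *\<^sub>R zs n = (real n + 2) *\<^sub>R f n (zs n)" using zs(2)[of n] by simp
    also have "\<dots> = u + (real n + 1) *\<^sub>R S (zs n)" unfolding f_def
      by (simp add: scaleR_add_right)
    finally have "(real n + 2) *\<^sub>R zs n = u + (real n + 1) *\<^sub>R S (zs n)" .
    thus ?thesis by (simp add: algebra_simps scaleR_2)
  qed
  have Sfix_ineq: "0 \<le> inner (u - zs n) (zs n - q)" if q: "q \<in> D" "S q = q" for n q
  proof -
    have "0 \<le> inner ((zs n - S (zs n)) - (q - S q)) (zs n - q)"
      by (rule nonexp_monotone[of S "zs n" q, OF ne[OF zs(1) q(1)]])
    hence "0 \<le> (real n + 1) * inner (zs n - S (zs n)) (zs n - q)" using q by simp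
    also have "\<dots> = inner (u - zs n) (zs n - q)" by (simp add: key[symmetric])
    finally show ?thesis .
  qed
  have pyth: "norm (u - zs n)^2 + norm (zs n - q)^2 \<le> norm (u - q)^2" if q: "q \<in> D" "S q = q" for n q
  proof -
    have "u - q = (u - zs n) + (zs n - q)" by simp
    hence "norm (u - q)^2 = norm (u - zs n)^2 + 2 * inner (u - zs n) (zs n - q) + norm (zs n - q)^2"
      by (metis nsq_add)
    thus ?thesis using Sfix_ineq[OF q, of n] by simp
  qed
  define R where "R n = norm (u - zs n)^2" for n
  have Rmono: "norm (zs n - zs m)^2 \<le> R n - R m" if mn: "m \<le> n" for m n
  proof (cases "m = n")
    case True then show ?thesis by simp
  next
    case False
    hence mn': "m < n" using mn by simp
    define a where "a = u - zs m"
    define b where "b = u - zs n"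
    have "0 \<le> inner ((zs m - S (zs m)) - (zs n - S (zs n))) (zs m - zs n)"
      by (rule nonexp_monotone[of S "zs m" "zs n", OF ne[OF zs(1) zs(1)]])
    hence "0 \<le> (real m + 1) * (real n + 1) * inner ((zs m - S (zs m)) - (zs n - S (zs n))) (zs m - zs n)"
      by simp
    also have "\<dots> = inner ((real n + 1) *\<^sub>R ((real m + 1) *\<^sub>R (zs m - S (zs m))) - (real m + 1) *\<^sub>R ((real n + 1) *\<^sub>R (zs n - S (zs n)))) (zs m - zs n)"
      by (simp add: inner_diff_left algebra_simps)
    also have "\<dots> = inner ((real n + 1) *\<^sub>R a - (real m + 1) *\<^sub>R b) (b - a)"
      unfolding key a_def b_def by (simp add: algebra_simps)
    also have "\<dots> = (real n - real m) * inner a (b - a) - (real m + 1) * (norm (b - a))^2"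
      by (simp add: inner_diff_left inner_diff_right power2_norm_eq_inner algebra_simps inner_commute)
    finally have "(real m + 1) * (norm (b - a))^2 \<le> (real n - real m) * inner a (b - a)" by simp
    moreover have "0 \<le> (real m + 1) * (norm (b - a))^2" by simp
    ultimately have "0 \<le> (real n - real m) * inner a (b - a)" by linarith
    moreover have "real n - real m > 0" using mn' by simp
    ultimately have ip: "0 \<le> inner a (b - a)" by (simp add: zero_le_mult_iff)
    have "b = a + (b - a)" by simp
    hence "norm b ^2 = norm a ^ 2 + 2 * inner a (b - a) + norm (b - a)^2" by (metis nsq_add)
    moreover have "b - a = zs m - zs n" unfolding a_def b_def by simp
    ultimately show ?thesis using ip unfolding R_def a_def[symmetric] b_def[symmetric]
      by (simp add: norm_minus_commute)
  qed
  have Rinc: "incseq R"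
  proof (rule incseq_SucI)
    fix n have "0 \<le> norm (zs (Suc n) - zs n)^2" by simp
    thus "R n \<le> R (Suc n)" using Rmono[of n "Suc n"] by linarith
  qed
  have Rbdd: "bdd_above (range R)"
  proof (rule bdd_aboveI2)
    fix n have "0 \<le> norm (zs n - q0)^2" by simp
    thus "R n \<le> norm (u - q0)^2" using pyth[OF q0, of n] unfolding R_def by linarith
  qed
  have Rconv: "convergent R" using LIMSEQ_incseq_SUP[OF Rbdd Rinc] unfolding convergent_def by blast
  hence RC: "Cauchy R" by (simp add: Cauchy_convergent_iff)
  have "Cauchy zs"
  proof (rule metric_CauchyI)
    fix e :: real assume e: "0 < e"
    obtain M where M: "\<And>m n. m \<ge> M \<Longrightarrow> n \<ge> M \<Longrightarrow> dist (R m) (R n) < e^2"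
      using metric_CauchyD[OF RC, of "e^2"] e by auto
    show "\<exists>M. \<forall>m\<ge>M. \<forall>n\<ge>M. dist (zs m) (zs n) < e"
    proof (intro exI allI impI)
      fix m n assume "m \<ge> M" "n \<ge> M"
      have "(dist (zs m) (zs n))^2 \<le> \<bar>R n - R m\<bar>"
        using Rmono[of m n] Rmono[of n m]
        by (cases "m \<le> n") (auto simp: dist_norm norm_minus_commute)
      also have "\<dots> < e^2" using M[OF \<open>n \<ge> M\<close> \<open>m \<ge> M\<close>] by (simp add: dist_real_def)
      finally show "dist (zs m) (zs n) < e" using e by (simp add: power_less_imp_less_base)
    qed
  qed
  then obtain z where zlim: "zs \<longlonglongrightarrow> z" by (auto simp: Cauchy_convergent_iff convergent_def)
  have zD: "z \<in> D" using closed_sequentially[OF clD zs(1) zlim] .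
  have Sz: "(\<lambda>n. S (zs n)) \<longlonglongrightarrow> S z"
  proof -
    have "(\<lambda>n. S (zs n) - S z) \<longlonglongrightarrow> 0"
    proof (rule Lim_null_comparison)
      show "\<forall>\<^sub>F n in sequentially. norm (S (zs n) - S z) \<le> norm (zs n - z)"
        using ne[OF zs(1) zD] by simp
      show "(\<lambda>n. norm (zs n - z)) \<longlonglongrightarrow> 0"
        using zlim by (simp add: LIM_zero_iff tendsto_norm_zero)
    qed
    thus ?thesis by (simp add: LIM_zero_iff)
  qed
  have A1: "(\<lambda>n. zs n - S (zs n)) \<longlonglongrightarrow> z - S z" by (intro tendsto_intros zlim Sz)
  have "(\<lambda>n. inverse (real (Suc n)) *\<^sub>R (u - zs n)) \<longlonglongrightarrow> 0 *\<^sub>R (u - z)"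
    by (intro tendsto_intros LIMSEQ_inverse_real_of_nat zlim)
  moreover have "inverse (real (Suc n)) *\<^sub>R (u - zs n) = zs n - S (zs n)" for n
  proof -
    have "inverse (real (Suc n)) *\<^sub>R ((real n + 1) *\<^sub>R (zs n - S (zs n))) = zs n - S (zs n)"
      by (simp add: of_nat_Suc add.commute)
    thus ?thesis by (simp only: key)
  qed
  ultimately have "(\<lambda>n. zs n - S (zs n)) \<longlonglongrightarrow> 0" by simp
  hence "z - S z = 0" using LIMSEQ_unique[OF A1] by blast
  hence Szz: "S z = z" by simp
  have zineq: "0 \<le> inner (u - z) (z - q)" if q: "q \<in> D" "S q = q" for q
  proof (rule LIMSEQ_le_const)
    show "(\<lambda>n. inner (u - zs n) (zs n - q)) \<longlonglongrightarrow> inner (u - z) (z - q)"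
      by (intro tendsto_intros zlim)
    show "\<exists>N. \<forall>n\<ge>N. 0 \<le> inner (u - zs n) (zs n - q)" using Sfix_ineq[OF q] by blast
  qed
  have zsb: "norm (zs n - q0) \<le> norm (u - q0)" for n
  proof -
    have "norm (zs n - q0)^2 \<le> norm (u - q0)^2" using pyth[OF q0, of n] by (smt (verit) zero_le_power2)
    thus ?thesis by (rule power2_le_imp_le) simp
  qed
  show ?thesis
    using zs zlim zD Szz zineq zsb unfolding f_def by metis
qed
lemma nsq_ineq: "(norm (a + b))^2 \<le> (norm a)^2 + 2 * inner b (a + (b::'a::real_inner))"
  by (simp add: nsq_add inner_add_right inner_commute power2_norm_eq_inner)

lemma path_ineq:
  fixes S :: "'a::real_inner \<Rightarrow> 'a"
  assumes zeq: "z = t *\<^sub>R u + (1 - t) *\<^sub>R S z" and t: "0 < t" "t \<le> 1"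
    and ne: "norm (S y - S z) \<le> norm (y - z)"
  shows "2 * t * inner (u - z) (y - z) \<le> t^2 * (norm (y - z))^2 + (1 - t)^2 * (2 * norm (y - S y) * norm (y - z) + (norm (y - S y))^2)"
proof -
  define d where "d = norm (y - z)"
  define e where "e = norm (y - S y)"
  have "y - z = (1 - t) *\<^sub>R (y - S z) + t *\<^sub>R (y - u)"
    by (subst zeq) (simp add: algebra_simps)
  hence "d^2 \<le> (norm ((1 - t) *\<^sub>R (y - S z)))^2 + 2 * inner (t *\<^sub>R (y - u)) (y - z)"
    unfolding d_def by (metis nsq_ineq)
  also have "(norm ((1 - t) *\<^sub>R (y - S z)))^2 = (1 - t)^2 * (norm (y - S z))^2"
    using t by (simp add: power_mult_distrib)
  also have "inner (t *\<^sub>R (y - u)) (y - z) = t * (d^2 - inner (u - z) (y - z))"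
  proof -
    have "y - u = (y - z) - (u - z)" by simp
    hence "inner (y - u) (y - z) = inner (y - z) (y - z) - inner (u - z) (y - z)"
      by (metis inner_diff_left)
    thus ?thesis unfolding d_def by (simp add: power2_norm_eq_inner)
  qed
  finally have A: "d^2 \<le> (1 - t)^2 * (norm (y - S z))^2 + 2 * t * (d^2 - inner (u - z) (y - z))" by simp
  have "norm (y - S z) \<le> e + d"
  proof -
    have "y - S z = (y - S y) + (S y - S z)" by simp
    hence "norm (y - S z) \<le> norm (y - S y) + norm (S y - S z)" by (metis norm_triangle_ineq)
    thus ?thesis using ne unfolding e_def d_def by linarith
  qed
  hence "(norm (y - S z))^2 \<le> (e + d)^2" by (simp add: power_mono)
  hence "(1 - t)^2 * (norm (y - S z))^2 \<le> (1 - t)^2 * (e + d)^2" by (simp add: mult_left_mono)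
  with A have "d^2 \<le> (1 - t)^2 * (e + d)^2 + 2 * t * (d^2 - inner (u - z) (y - z))" by linarith
  thus ?thesis unfolding d_def[symmetric] e_def[symmetric]
    by (simp add: power2_eq_square algebra_simps)
qed


lemma halpern_nonexp:
  fixes D :: "'a::{real_inner,complete_space} set" and S :: "'a \<Rightarrow> 'a"
  assumes clD: "closed D" and cvD: "convex D" and SD: "S ` D \<subseteq> D"
    and ne: "\<And>x y. x \<in> D \<Longrightarrow> y \<in> D \<Longrightarrow> norm (S x - S y) \<le> norm (x - y)"
    and q0: "q0 \<in> D" "S q0 = q0" and uD: "u \<in> D"
    and lam: "steering_seq lam" and x0: "x 0 \<in> D"
    and rec: "\<And>k. x (Suc k) = lam k *\<^sub>R u + (1 - lam k) *\<^sub>R S (x k)"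
  shows "\<exists>p. p \<in> D \<and> S p = p \<and> (\<forall>q\<in>D. S q = q \<longrightarrow> 0 \<le> inner (u - p) (p - q)) \<and> x \<longlonglongrightarrow> p"
proof -
  have l01: "0 \<le> lam k" "lam k \<le> 1" for k using lam unfolding steering_seq_def by auto
  have lam0: "lam \<longlonglongrightarrow> 0" and lamns: "\<not> summable lam"
    and dls: "summable (\<lambda>k. \<bar>lam (Suc k) - lam k\<bar>)" using lam unfolding steering_seq_def by auto
  obtain zs p where zs: "\<And>n. zs n \<in> D" "\<And>n. zs n = (1 / (real n + 2)) *\<^sub>R u + ((real n + 1) / (real n + 2)) *\<^sub>R S (zs n)"
    and zlim: "zs \<longlonglongrightarrow> p" and pD: "p \<in> D" and Sp: "S p = p"
    and pineq: "\<forall>q\<in>D. S q = q \<longrightarrow> 0 \<le> inner (u - p) (p - q)"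
    and zsb: "\<And>n. norm (zs n - q0) \<le> norm (u - q0)"
    using path_limit[OF clD cvD SD ne q0 uD] by blast
  have xD: "x k \<in> D" for k
  proof (induction k)
    case 0 then show ?case using x0 by simp
  next
    case (Suc k)
    have "S (x k) \<in> D" using SD Suc by auto
    thus ?case unfolding rec by (rule convexD[OF cvD uD]) (use l01 in auto)
  qed
  define B0 where "B0 = max (norm (u - q0)) (norm (x 0 - q0))"
  have xb: "norm (x k - q0) \<le> B0" for k
  proof (induction k)
    case 0 then show ?case unfolding B0_def by simp
  next
    case (Suc k)
    have "x (Suc k) - q0 = lam k *\<^sub>R (u - q0) + (1 - lam k) *\<^sub>R (S (x k) - S q0)"
      unfolding rec using q0(2) by (simp add: algebra_simps)
    hence "norm (x (Suc k) - q0) \<le> norm (lam k *\<^sub>R (u - q0)) + norm ((1 - lam k) *\<^sub>R (S (x k) - S q0))"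
      by (metis norm_triangle_ineq)
    also have "\<dots> = lam k * norm (u - q0) + (1 - lam k) * norm (S (x k) - S q0)"
      using l01[of k] by simp
    also have "\<dots> \<le> lam k * B0 + (1 - lam k) * B0"
    proof (intro add_mono mult_left_mono)
      show "norm (u - q0) \<le> B0" unfolding B0_def by simp
      show "norm (S (x k) - S q0) \<le> B0" using ne[OF xD q0(1), of k] Suc by linarith
    qed (use l01[of k] in auto)
    finally show ?case by (simp add: algebra_simps)
  qed
  define M where "M = norm (u - q0) + B0"
  have Mb: "norm (u - S (x k)) \<le> M" for k
  proof -
    have "u - S (x k) = (u - q0) - (S (x k) - S q0)" using q0 by simp
    hence "norm (u - S (x k)) \<le> norm (u - q0) + norm (S (x k) - S q0)" by (metis norm_triangle_ineq4)
    thus ?thesis unfolding M_def using ne[OF xD q0(1), of k] xb[of k] by linarith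
  qed
  have M0: "0 \<le> M" using Mb[of 0] norm_ge_zero[of "u - S (x 0)"] by linarith
  define a where "a k = norm (x (Suc k) - x k)" for k
  have arec: "a (Suc k) \<le> (1 - lam (Suc k)) * a k + lam (Suc k) * 0 + M * \<bar>lam (Suc k) - lam k\<bar>" for k
  proof -
    have "x (Suc (Suc k)) - x (Suc k) = (lam (Suc k) - lam k) *\<^sub>R (u - S (x k)) + (1 - lam (Suc k)) *\<^sub>R (S (x (Suc k)) - S (x k))"
      unfolding rec[of "Suc k"] rec[of k] by (simp add: algebra_simps)
    hence "a (Suc k) \<le> norm ((lam (Suc k) - lam k) *\<^sub>R (u - S (x k))) + norm ((1 - lam (Suc k)) *\<^sub>R (S (x (Suc k)) - S (x k)))"
      unfolding a_def by (metis norm_triangle_ineq)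
    also have "\<dots> = \<bar>lam (Suc k) - lam k\<bar> * norm (u - S (x k)) + (1 - lam (Suc k)) * norm (S (x (Suc k)) - S (x k))"
      using l01[of "Suc k"] by simp
    also have "\<dots> \<le> \<bar>lam (Suc k) - lam k\<bar> * M + (1 - lam (Suc k)) * a k"
    proof (intro add_mono mult_left_mono)
      show "norm (u - S (x k)) \<le> M" by (rule Mb)
      show "norm (S (x (Suc k)) - S (x k)) \<le> a k" unfolding a_def by (rule ne[OF xD xD])
    qed (use l01[of "Suc k"] in auto)
    finally show ?thesis by (simp add: algebra_simps)
  qed
  have alim: "a \<longlonglongrightarrow> 0"
  proof (rule halpern_seq_lemma[where \<gamma>="\<lambda>k. lam (Suc k)" and \<beta>="\<lambda>k. 0" and b="\<lambda>k. M * \<bar>lam (Suc k) - lam k\<bar>"])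
    show "0 \<le> a k" for k unfolding a_def by simp
    show "0 \<le> lam (Suc k) \<and> lam (Suc k) \<le> 1" for k using l01 by auto
    show "\<not> summable (\<lambda>k. lam (Suc k))" using lamns summable_Suc_iff[of lam] by simp
    show "0 \<le> M * \<bar>lam (Suc k) - lam k\<bar>" for k using M0 by simp
    show "summable (\<lambda>k. M * \<bar>lam (Suc k) - lam k\<bar>)" using dls by (rule summable_mult)
    show "\<forall>\<^sub>F k in sequentially. (0::real) \<le> \<epsilon>" if "\<epsilon> > 0" for \<epsilon> using that by simp
  qed (rule arec)
  define e where "e k = norm (x k - S (x k))" for k
  have elim: "e \<longlonglongrightarrow> 0"
  proof -
    have "(\<lambda>k. e k) \<longlonglongrightarrow> 0"
    proof (rule Lim_null_comparison)
      show "\<forall>\<^sub>F k in sequentially. norm (e k) \<le> a k + lam k * M"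
      proof (intro always_eventually allI)
        fix k
        have "x k - S (x k) = (x k - x (Suc k)) + lam k *\<^sub>R (u - S (x k))"
          unfolding rec by (simp add: algebra_simps)
        hence "e k \<le> norm (x k - x (Suc k)) + norm (lam k *\<^sub>R (u - S (x k)))"
          unfolding e_def by (metis norm_triangle_ineq)
        also have "\<dots> \<le> a k + lam k * M"
          using Mb[of k] l01[of k] unfolding a_def by (simp add: norm_minus_commute mult_left_mono)
        finally show "norm (e k) \<le> a k + lam k * M" unfolding e_def by simp
      qed
      show "(\<lambda>k. a k + lam k * M) \<longlonglongrightarrow> 0" using alim lam0
        by (metis (no_types) add_0 mult_zero_left tendsto_add tendsto_mult_right)
    qed
    thus ?thesis by simp
  qed
  define K where "K = B0 + norm (u - q0)"
  have dK: "norm (x k - zs n) \<le> K" for k n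
  proof -
    have "x k - zs n = (x k - q0) - (zs n - q0)" by simp
    hence "norm (x k - zs n) \<le> norm (x k - q0) + norm (zs n - q0)" by (metis norm_triangle_ineq4)
    thus ?thesis unfolding K_def using xb[of k] zsb[of n] by linarith
  qed
  have K0: "0 \<le> K" using dK[of 0 0] norm_ge_zero[of "x 0 - zs 0"] by linarith
  define C where "C = norm (u - p) + B0 + norm (p - q0)"
  have ipn: "inner (u - zs n) (x k - zs n) \<le> (1 / (real n + 2)) * K^2 / 2 + (2 * e k * K + (e k)^2) / (2 * (1 / (real n + 2)))" for n k
  proof -
    define t where "t = 1 / (real n + 2)"
    have t: "0 < t" "t \<le> 1" unfolding t_def by auto
    have zeq: "zs n = t *\<^sub>R u + (1 - t) *\<^sub>R S (zs n)"
    proof -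
      have "1 - t = (real n + 1) / (real n + 2)" unfolding t_def by (simp add: field_simps)
      thus ?thesis using zs(2)[of n] unfolding t_def by simp
    qed
    have P: "2 * t * inner (u - zs n) (x k - zs n) \<le> t^2 * (norm (x k - zs n))^2 + (1 - t)^2 * (2 * e k * norm (x k - zs n) + (e k)^2)"
      using path_ineq[OF zeq t ne[OF xD zs(1)]] unfolding e_def by simp
    have e0: "0 \<le> e k" unfolding e_def by simp
    have "t^2 * (norm (x k - zs n))^2 \<le> t^2 * K^2"
      using dK[of k n] by (intro mult_left_mono power_mono) auto
    moreover have "(1 - t)^2 * (2 * e k * norm (x k - zs n) + (e k)^2) \<le> (2 * e k * K + (e k)^2)"
    proof -
      have "(1 - t)^2 * (2 * e k * norm (x k - zs n) + (e k)^2) \<le> 1 * (2 * e k * K + (e k)^2)"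
      proof (rule mult_mono)
        show "(1 - t)^2 \<le> 1" using t by (simp add: power_le_one)
        show "2 * e k * norm (x k - zs n) + (e k)^2 \<le> 2 * e k * K + (e k)^2"
          using dK[of k n] e0 by (simp add: mult_left_mono)
      qed (use e0 K0 in auto)
      thus ?thesis by simp
    qed
    ultimately have "2 * t * inner (u - zs n) (x k - zs n) \<le> t^2 * K^2 + (2 * e k * K + (e k)^2)"
      using P by linarith
    hence "inner (u - zs n) (x k - zs n) \<le> (t^2 * K^2 + (2 * e k * K + (e k)^2)) / (2 * t)"
      using t by (simp add: field_simps)
    also have "\<dots> = t * K^2 / 2 + (2 * e k * K + (e k)^2) / (2 * t)"
      using t by (simp add: field_simps power2_eq_square)
    finally show ?thesis unfolding t_def .
  qed
  have ipdiff: "inner (u - p) (x k - p) \<le> norm (p - zs n) * C + inner (u - zs n) (x k - zs n)" for k n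
  proof -
    have eq: "inner (u - p) (x k - p) - inner (u - zs n) (x k - zs n) = - inner (u - p) (p - zs n) - inner (p - zs n) (x k - p) - inner (p - zs n) (p - zs n)"
    proof -
      have "u - zs n = (u - p) + (p - zs n)" "x k - zs n = (x k - p) + (p - zs n)" by simp_all
      hence "inner (u - zs n) (x k - zs n) = inner ((u - p) + (p - zs n)) ((x k - p) + (p - zs n))" by simp
      also have "\<dots> = inner (u - p) (x k - p) + inner (u - p) (p - zs n) + inner (p - zs n) (x k - p) + inner (p - zs n) (p - zs n)"
        by (simp only: inner_add_left inner_add_right add.assoc)
      finally show ?thesis by simp
    qed
    have "- inner (u - p) (p - zs n) \<le> norm (u - p) * norm (p - zs n)"
    proof -
      have "- inner (u - p) (p - zs n) = inner (u - p) (zs n - p)" by (simp add: inner_diff_right)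
      thus ?thesis using norm_cauchy_schwarz[of "u - p" "zs n - p"] by (simp add: norm_minus_commute)
    qed
    moreover have "- inner (p - zs n) (x k - p) \<le> norm (p - zs n) * norm (x k - p)"
    proof -
      have "- inner (p - zs n) (x k - p) = inner (zs n - p) (x k - p)" by (simp add: inner_diff_left)
      thus ?thesis using norm_cauchy_schwarz[of "zs n - p" "x k - p"] by (simp add: norm_minus_commute)
    qed
    moreover have "0 \<le> inner (p - zs n) (p - zs n)" by simp
    moreover have "norm (x k - p) \<le> B0 + norm (p - q0)"
    proof -
      have "x k - p = (x k - q0) - (p - q0)" by simp
      hence "norm (x k - p) \<le> norm (x k - q0) + norm (p - q0)" by (metis norm_triangle_ineq4)
      thus ?thesis using xb[of k] by linarith
    qed
    ultimately have "inner (u - p) (x k - p) - inner (u - zs n) (x k - zs n) \<le> norm (p - zs n) * C"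
      unfolding eq C_def by (smt (verit) distrib_left mult_left_mono norm_ge_zero mult.commute)
    thus ?thesis by simp
  qed
  have step4: "\<forall>\<^sub>F k in sequentially. inner (u - p) (x k - p) \<le> \<epsilon>" if eps: "\<epsilon> > 0" for \<epsilon>
  proof -
    have l1: "(\<lambda>n. norm (p - zs n) * C) \<longlonglongrightarrow> 0 * C"
    proof -
      have "(\<lambda>n. norm (zs n - p)) \<longlonglongrightarrow> 0" using tendsto_norm_zero[OF LIM_zero[OF zlim]] .
      hence "(\<lambda>n. norm (p - zs n)) \<longlonglongrightarrow> 0" by (simp add: norm_minus_commute)
      thus ?thesis by (intro tendsto_mult tendsto_const)
    qed
    have l2: "(\<lambda>n. (1 / (real n + 2)) * K^2 / 2) \<longlonglongrightarrow> 0 * K^2 / 2"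
    proof (intro tendsto_intros)
      show "(\<lambda>n. 1 / (real n + 2)) \<longlonglongrightarrow> 0"
      proof -
        have "(\<lambda>n. inverse (real (Suc (Suc n)))) \<longlonglongrightarrow> 0"
          using LIMSEQ_inverse_real_of_nat LIMSEQ_Suc by blast
        thus ?thesis by (simp add: divide_inverse add.commute of_nat_Suc)
      qed
    qed simp
    have "\<forall>\<^sub>F n in sequentially. norm (p - zs n) * C < \<epsilon>/3 \<and> (1 / (real n + 2)) * K^2 / 2 < \<epsilon>/3"
      using order_tendstoD(2)[OF l1, of "\<epsilon>/3"] order_tendstoD(2)[OF l2, of "\<epsilon>/3"] eps
      by (auto intro: eventually_conj)
    then obtain n where n: "norm (p - zs n) * C < \<epsilon>/3" "(1 / (real n + 2)) * K^2 / 2 < \<epsilon>/3"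
      using eventually_happens sequentially_bot by blast
    have l3: "(\<lambda>k. (2 * e k * K + (e k)^2) / (2 * (1 / (real n + 2)))) \<longlonglongrightarrow> (2 * 0 * K + 0^2) / (2 * (1 / (real n + 2)))"
      by (intro tendsto_intros elim) simp
    have "\<forall>\<^sub>F k in sequentially. (2 * e k * K + (e k)^2) / (2 * (1 / (real n + 2))) < \<epsilon>/3"
      using order_tendstoD(2)[OF l3, of "\<epsilon>/3"] eps by simp
    thus ?thesis
    proof (rule eventually_mono)
      fix k assume "(2 * e k * K + (e k)^2) / (2 * (1 / (real n + 2))) < \<epsilon>/3"
      thus "inner (u - p) (x k - p) \<le> \<epsilon>" using ipdiff[of k n] ipn[of n k] n by linarith
    qed
  qed
  define A where "A k = (norm (x k - p))^2" for k
  have Arec: "A (Suc k) \<le> (1 - lam k) * A k + lam k * (2 * inner (u - p) (x (Suc k) - p)) + 0" for k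
  proof -
    have xe: "x (Suc k) - p = (1 - lam k) *\<^sub>R (S (x k) - S p) + lam k *\<^sub>R (u - p)"
      unfolding rec using Sp by (simp add: algebra_simps)
    have "A (Suc k) \<le> (norm ((1 - lam k) *\<^sub>R (S (x k) - S p)))^2 + 2 * inner (lam k *\<^sub>R (u - p)) (x (Suc k) - p)"
      unfolding A_def xe by (rule nsq_ineq)
    also have "(norm ((1 - lam k) *\<^sub>R (S (x k) - S p)))^2 = (1 - lam k)^2 * (norm (S (x k) - S p))^2"
      using l01[of k] by (simp add: power_mult_distrib)
    also have "\<dots> \<le> (1 - lam k) * A k"
    proof -
      have "(norm (S (x k) - S p))^2 \<le> A k" unfolding A_def
        using ne[OF xD pD, of k] by (simp add: power_mono)
      moreover have "(1 - lam k)^2 \<le> 1 - lam k" using l01[of k] by (simp add: power2_eq_square mult_left_le_one_le)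
      ultimately show ?thesis using l01[of k] unfolding A_def
        by (meson mult_mono' order_trans zero_le_power2 norm_ge_zero mult_right_mono diff_ge_0_iff_ge)
    qed
    finally show ?thesis by simp
  qed
  have Alim: "A \<longlonglongrightarrow> 0"
  proof (rule halpern_seq_lemma[where \<gamma>=lam and b="\<lambda>k. 0" and \<beta>="\<lambda>k. 2 * inner (u - p) (x (Suc k) - p)"])
    show "0 \<le> A k" for k unfolding A_def by simp
    show "0 \<le> lam k \<and> lam k \<le> 1" for k using l01 by auto
    show "\<not> summable lam" by (rule lamns)
    show "0 \<le> (0::real)" by simp
    show "summable (\<lambda>k. 0::real)" by simp
    show "\<forall>\<^sub>F k in sequentially. 2 * inner (u - p) (x (Suc k) - p) \<le> \<epsilon>" if "\<epsilon> > 0" for \<epsilon>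
    proof -
      have "\<forall>\<^sub>F k in sequentially. inner (u - p) (x k - p) \<le> \<epsilon>/2" using step4[of "\<epsilon>/2"] that by simp
      then obtain N where N: "\<forall>k\<ge>N. inner (u - p) (x k - p) \<le> \<epsilon>/2" by (auto simp: eventually_sequentially)
      have "\<forall>k\<ge>N. 2 * inner (u - p) (x (Suc k) - p) \<le> \<epsilon>"
      proof (intro allI impI)
        fix k assume "N \<le> k"
        hence "inner (u - p) (x (Suc k) - p) \<le> \<epsilon>/2" using N by simp
        thus "2 * inner (u - p) (x (Suc k) - p) \<le> \<epsilon>" by simp
      qed
      thus ?thesis by (auto simp: eventually_sequentially)
    qed
  qed (rule Arec)
  have "x \<longlonglongrightarrow> p"
  proof -
    have "(\<lambda>k. sqrt (A k)) \<longlonglongrightarrow> sqrt 0" by (intro tendsto_intros Alim)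
    hence "(\<lambda>k. norm (x k - p)) \<longlonglongrightarrow> 0" unfolding A_def by simp
    thus ?thesis by (simp add: tendsto_norm_zero_iff LIM_zero_iff)
  qed
  thus ?thesis using pD Sp pineq by blast
qed

lemma my_has_sum_diff:
  fixes f g :: "'b \<Rightarrow> 'a::topological_ab_group_add"
  assumes "(f has_sum a) A" "(g has_sum b) A"
  shows "((\<lambda>x. f x - g x) has_sum (a - b)) A"
proof -
  have "((\<lambda>x. - g x) has_sum (- b)) A" by (simp add: has_sum_uminus assms(2))
  from has_sum_add[OF assms(1) this] show ?thesis by simp
qed

lemma firm_nonexp:
  assumes "firmly_nonexpansive_on D T" "x \<in> D" "y \<in> D"
  shows "norm (T x - T y) \<le> norm (x - y)"
proof -
  have "(norm (T x - T y))^2 \<le> inner (x - y) (T x - T y)" using assms unfolding firmly_nonexpansive_on_def by blast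
  also have "\<dots> \<le> norm (x - y) * norm (T x - T y)" by (rule norm_cauchy_schwarz)
  finally have *: "norm (T x - T y) * norm (T x - T y) \<le> norm (x - y) * norm (T x - T y)"
    by (simp add: power2_eq_square)
  show ?thesis
  proof (cases "norm (T x - T y) = 0")
    case True thus ?thesis by simp
  next
    case False
    hence "norm (T x - T y) > 0" by simp
    with * show ?thesis by (simp add: mult_le_cancel_right)
  qed
qed

lemma firm_fix:
  assumes "firmly_nonexpansive_on D T" "x \<in> D" "q \<in> D" "T q = q"
  shows "(norm (T x - x))^2 \<le> (norm (x - q))^2 - (norm (T x - q))^2"
proof -
  have "(norm (T x - T q))^2 \<le> inner (x - q) (T x - T q)" using assms(1-3) unfolding firmly_nonexpansive_on_def by blast
  hence a: "(norm (T x - q))^2 \<le> inner (T x - q) (x - q)" using assms(4) by (simp add: inner_commute)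
  have "T x - x = (T x - q) - (x - q)" by simp
  hence "(norm (T x - x))^2 = (norm (T x - q))^2 - 2 * inner (T x - q) (x - q) + (norm (x - q))^2"
    by (metis nsq_diff)
  with a show ?thesis by linarith
qed

locale opsetup =
  fixes D :: "'a::{real_inner,complete_space} set" and I :: "nat set" and T :: "nat \<Rightarrow> 'a \<Rightarrow> 'a"
  assumes TD: "\<And>i. i \<in> I \<Longrightarrow> T i ` D \<subseteq> D"
    and Tfirm: "\<And>i. i \<in> I \<Longrightarrow> firmly_nonexpansive_on D (T i)"
begin

lemma fold_D: "set t \<subseteq> I \<Longrightarrow> x \<in> D \<Longrightarrow> fold T t x \<in> D"
proof (induction t arbitrary: x)
  case Nil then show ?case by simp
next
  case (Cons i t)
  have "T i x \<in> D" using TD[of i] Cons.prems by auto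
  thus ?case using Cons by simp
qed

lemma fold_ne: "set t \<subseteq> I \<Longrightarrow> x \<in> D \<Longrightarrow> y \<in> D \<Longrightarrow> norm (fold T t x - fold T t y) \<le> norm (x - y)"
proof (induction t arbitrary: x y)
  case Nil then show ?case by simp
next
  case (Cons i t)
  have D: "T i x \<in> D" "T i y \<in> D" using TD[of i] Cons.prems by auto
  have "norm (fold T t (T i x) - fold T t (T i y)) \<le> norm (T i x - T i y)" using Cons D by simp
  also have "\<dots> \<le> norm (x - y)" using firm_nonexp[OF Tfirm] Cons.prems by simp
  finally show ?case by simp
qed

lemma fold_fixpt: "set t \<subseteq> I \<Longrightarrow> (\<And>i. i \<in> I \<Longrightarrow> T i q = q) \<Longrightarrow> fold T t q = q"
  by (induction t) auto

lemma fold_fixes: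
  assumes "set t \<subseteq> I" "q \<in> D" "\<And>i. i \<in> I \<Longrightarrow> T i q = q" "x \<in> D" "norm (x - q) \<le> norm (fold T t x - q)"
  shows "\<forall>i\<in>set t. T i x = x"
  using assms
proof (induction t arbitrary: x)
  case Nil then show ?case by simp
next
  case (Cons i t)
  have iI: "i \<in> I" and tI: "set t \<subseteq> I" using Cons.prems by auto
  have TxD: "T i x \<in> D" using TD[OF iI] Cons.prems by auto
  have "norm (fold T t (T i x) - q) \<le> norm (T i x - q)"
    using fold_ne[OF tI TxD \<open>q \<in> D\<close>] fold_fixpt[OF tI Cons.prems(3)] by simp
  also have "\<dots> \<le> norm (x - q)" using firm_nonexp[OF Tfirm[OF iI] \<open>x \<in> D\<close> \<open>q \<in> D\<close>] Cons.prems(3)[OF iI] by simp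
  finally have "norm (fold T t (T i x) - q) \<le> norm (x - q)" .
  hence eq: "norm (T i x - q) = norm (x - q)" using Cons.prems(5) \<open>norm (T i x - q) \<le> norm (x - q)\<close>
    \<open>norm (fold T t (T i x) - q) \<le> norm (T i x - q)\<close> by simp
  have "(norm (T i x - x))^2 \<le> 0"
    using firm_fix[OF Tfirm[OF iI] \<open>x \<in> D\<close> \<open>q \<in> D\<close> Cons.prems(3)[OF iI]] eq by simp
  hence Tix: "T i x = x" by simp
  have "\<forall>j\<in>set t. T j x = x"
    using Cons.IH[OF tI \<open>q \<in> D\<close> Cons.prems(3) \<open>x \<in> D\<close>] Cons.prems(5) Tix by simp
  thus ?case using Tix by simp
qed

end

lemma abs_summable_summable_cs:
  fixes f :: \<open>'a \<Rightarrow> 'b :: {real_normed_vector,complete_space}\<close>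
  assumes \<open>f abs_summable_on A\<close>
  shows \<open>f summable_on A\<close>
proof -
  from assms obtain L where lim: \<open>(sum (\<lambda>x. norm (f x)) \<longlongrightarrow> L) (finite_subsets_at_top A)\<close>
    unfolding has_sum_def summable_on_def by blast
  then have *: \<open>cauchy_filter (filtermap (sum (\<lambda>x. norm (f x))) (finite_subsets_at_top A))\<close>
    by (auto intro!: nhds_imp_cauchy_filter simp: filterlim_def)
  have \<open>\<exists>P. eventually P (finite_subsets_at_top A) \<and>
              (\<forall>F F'. P F \<and> P F' \<longrightarrow> dist (sum f F) (sum f F') < e)\<close> if \<open>e>0\<close> for e
  proof -
    define d P where \<open>d = e/4\<close> and \<open>P F \<longleftrightarrow> finite F \<and> F \<subseteq> A \<and> dist (sum (\<lambda>x. norm (f x)) F) L < d\<close> for F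
    then have \<open>d > 0\<close>
      by (simp add: d_def that)
    have ev_P: \<open>eventually P (finite_subsets_at_top A)\<close>
      using lim
      by (auto simp add: P_def[abs_def] \<open>0 < d\<close> eventually_conj_iff eventually_finite_subsets_at_top_weakI tendsto_iff)
    
    moreover have \<open>dist (sum f F1) (sum f F2) < e\<close> if \<open>P F1\<close> and \<open>P F2\<close> for F1 F2
    proof -
      from ev_P
      obtain F' where \<open>finite F'\<close> and \<open>F' \<subseteq> A\<close> and P_sup_F': \<open>finite F \<and> F \<supseteq> F' \<and> F \<subseteq> A \<Longrightarrow> P F\<close> for F
        by atomize_elim (simp add: eventually_finite_subsets_at_top)
      define F where \<open>F = F' \<union> F1 \<union> F2\<close>
      have \<open>finite F\<close> and \<open>F \<subseteq> A\<close>
        using F_def P_def[abs_def] that \<open>finite F'\<close> \<open>F' \<subseteq> A\<close> by auto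
      have dist_F: \<open>dist (sum (\<lambda>x. norm (f x)) F) L < d\<close>
        by (metis F_def \<open>F \<subseteq> A\<close> P_def P_sup_F' \<open>finite F\<close> le_supE order_refl)

      have dist_F_subset: \<open>dist (sum f F) (sum f F') < 2*d\<close> if F': \<open>F' \<subseteq> F\<close> \<open>P F'\<close> for F'
      proof -
        have \<open>dist (sum f F) (sum f F') = norm (sum f (F-F'))\<close>
          unfolding dist_norm using \<open>finite F\<close> F' by (subst sum_diff) auto
        also have \<open>\<dots> \<le> norm (\<Sum>x\<in>F-F'. norm (f x))\<close>
          by (rule order.trans[OF sum_norm_le[OF order.refl]]) auto
        also have \<open>\<dots> = dist (\<Sum>x\<in>F. norm (f x)) (\<Sum>x\<in>F'. norm (f x))\<close>
          unfolding dist_norm using \<open>finite F\<close> F' by (subst sum_diff) auto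
        also have \<open>\<dots> < 2 * d\<close>
          using dist_F F' unfolding P_def dist_norm real_norm_def by linarith
        finally show \<open>dist (sum f F) (sum f F') < 2*d\<close> .
      qed

      have \<open>dist (sum f F1) (sum f F2) \<le> dist (sum f F) (sum f F1) + dist (sum f F) (sum f F2)\<close>
        by (rule dist_triangle3)
      also have \<open>\<dots> < 2 * d + 2 * d\<close>
        by (intro add_strict_mono dist_F_subset that) (auto simp: F_def)
      also have \<open>\<dots> \<le> e\<close>
        by (auto simp: d_def)
      finally show \<open>dist (sum f F1) (sum f F2) < e\<close> .
    qed
    then show ?thesis
      using ev_P by blast
  qed
  then have \<open>cauchy_filter (filtermap (sum f) (finite_subsets_at_top A))\<close>
    by (simp add: cauchy_filter_metric_filtermap)
  moreover have "complete (UNIV::'b set)"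
    by (rule complete_UNIV)
  ultimately obtain L' where \<open>(sum f \<longlongrightarrow> L') (finite_subsets_at_top A)\<close>
    using complete_uniform[where S=UNIV] by (force simp add: filterlim_def)
  then show ?thesis
    using summable_on_def has_sum_def by blast
qed

locale ssetup = opsetup D I T for D :: "'a::{real_inner,complete_space} set" and I T +
  fixes \<Omega> :: "nat list set" and w :: "nat list \<Rightarrow> real" and q0 :: 'a
  assumes clD: "closed D" and cvD: "convex D"
    and fitI: "fit I \<Omega>" and wpos: "\<And>t. t \<in> \<Omega> \<Longrightarrow> 0 < w t" and wsum: "(w has_sum 1) \<Omega>"
    and q0D: "q0 \<in> D" and q0fix: "\<And>i. i \<in> I \<Longrightarrow> T i q0 = q0"
begin

definition S where "S x = (\<Sum>\<^sub>\<infinity>t\<in>\<Omega>. w t *\<^sub>R string_op T t x)"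

lemma tI: "t \<in> \<Omega> \<Longrightarrow> set t \<subseteq> I" using fitI unfolding fit_def by blast

lemma summ: assumes xD: "x \<in> D" shows "(\<lambda>t. w t *\<^sub>R string_op T t x) summable_on \<Omega>"
proof -
  define c where "c = norm q0 + norm (x - q0)"
  have c0: "0 \<le> c" unfolding c_def by simp
  have "(\<lambda>t. w t * c) summable_on \<Omega>" using wsum summable_on_cmult_left summable_on_def by blast
  hence "(\<lambda>t. norm (w t *\<^sub>R string_op T t x)) summable_on \<Omega>"
  proof (rule Infinite_Sum.abs_summable_on_comparison_test')
    fix t assume t: "t \<in> \<Omega>"
    have "norm (fold T t x) \<le> norm q0 + norm (fold T t x - q0)"
      by (metis add.commute diff_add_cancel norm_triangle_ineq)
    also have "norm (fold T t x - q0) \<le> norm (x - q0)"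
      using fold_ne[OF tI[OF t] xD q0D] fold_fixpt[OF tI[OF t] q0fix] by simp
    finally have "norm (fold T t x) \<le> c" unfolding c_def by simp
    hence "w t * norm (fold T t x) \<le> w t * c" using wpos[OF t] by (simp add: mult_left_mono)
    thus "norm (w t *\<^sub>R string_op T t x) \<le> w t * c"
      using wpos[OF t] c0 unfolding string_op_def by simp
  qed
  thus ?thesis by (rule abs_summable_summable_cs)
qed

lemma hs: "x \<in> D \<Longrightarrow> ((\<lambda>t. w t *\<^sub>R string_op T t x) has_sum S x) \<Omega>"
  unfolding S_def using summ by (rule has_sum_infsum)

lemma SD: assumes xD: "x \<in> D" shows "S x \<in> D"
proof -
  define f where "f t = w t *\<^sub>R string_op T t x" for t
  have l1: "(sum f \<longlongrightarrow> S x) (finite_subsets_at_top \<Omega>)" using hs[OF xD] unfolding has_sum_def f_def .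
  have l2: "(sum w \<longlongrightarrow> 1) (finite_subsets_at_top \<Omega>)" using wsum unfolding has_sum_def .
  have l3: "((\<lambda>F. (1 / sum w F) *\<^sub>R sum f F) \<longlongrightarrow> (1 / 1) *\<^sub>R S x) (finite_subsets_at_top \<Omega>)"
    by (intro tendsto_intros l1 l2) simp
  have ev1: "eventually (\<lambda>F. finite F \<and> F \<subseteq> \<Omega>) (finite_subsets_at_top \<Omega>)"
    by (rule eventually_finite_subsets_at_top_weakI) auto
  have ev2: "eventually (\<lambda>F. 0 < sum w F) (finite_subsets_at_top \<Omega>)"
    using order_tendstoD(1)[OF l2, of 0] by simp
  have "eventually (\<lambda>F. (1 / sum w F) *\<^sub>R sum f F \<in> D) (finite_subsets_at_top \<Omega>)"
  proof (rule eventually_mono[OF eventually_conj[OF ev1 ev2]])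
    fix F assume F: "(finite F \<and> F \<subseteq> \<Omega>) \<and> 0 < sum w F"
    have "(1 / sum w F) *\<^sub>R sum f F = (\<Sum>t\<in>F. (w t / sum w F) *\<^sub>R string_op T t x)"
      unfolding f_def scaleR_sum_right by (simp add: divide_inverse mult.commute)
    also have "\<dots> \<in> D"
    proof (rule convex_sum)
      show "finite F" "convex D" using F cvD by auto
      show "(\<Sum>t\<in>F. w t / sum w F) = 1" using F by (simp add: sum_divide_distrib[symmetric])
      show "0 \<le> w i / sum w F" if "i \<in> F" for i using F that wpos[of i] by auto
      show "string_op T i x \<in> D" if "i \<in> F" for i
        using F that fold_D[OF tI xD] unfolding string_op_def by auto
    qed
    finally show "(1 / sum w F) *\<^sub>R sum f F \<in> D" .
  qed
  from Lim_in_closed_set[OF clD this finite_subsets_at_top_neq_bot l3] show ?thesis by simp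
qed

lemma Sne: assumes "x \<in> D" "y \<in> D" shows "norm (S x - S y) \<le> norm (x - y)"
proof -
  have "norm (S x - S y) \<le> 1 * norm (x - y)"
proof (rule norm_infsum_le)
  show "((\<lambda>t. w t *\<^sub>R string_op T t x - w t *\<^sub>R string_op T t y) has_sum (S x - S y)) \<Omega>"
    by (rule my_has_sum_diff[OF hs hs]) (use assms in auto)
  show "((\<lambda>t. w t * norm (x - y)) has_sum (1 * norm (x - y))) \<Omega>"
    by (rule has_sum_cmult_left[OF wsum])
  fix t assume t: "t \<in> \<Omega>"
  have "norm (w t *\<^sub>R string_op T t x - w t *\<^sub>R string_op T t y) = w t * norm (fold T t x - fold T t y)"
    using wpos[OF t] unfolding string_op_def by (simp add: scaleR_diff_right[symmetric])
  also have "\<dots> \<le> w t * norm (x - y)" using fold_ne[OF tI[OF t] assms] wpos[OF t] by (simp add: mult_left_mono)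
  finally show "norm (w t *\<^sub>R string_op T t x - w t *\<^sub>R string_op T t y) \<le> w t * norm (x - y)" .
qed
  thus ?thesis by simp
qed

lemma hs_const: fixes q :: 'a shows "((\<lambda>t. w t *\<^sub>R q) has_sum q) \<Omega>"
  using has_sum_bounded_linear[OF bounded_linear_scaleR_left wsum, of q] by simp

lemma Sfix: assumes "\<And>i. i \<in> I \<Longrightarrow> T i q = q" shows "S q = q"
proof -
  have "((\<lambda>t. w t *\<^sub>R string_op T t q) has_sum q) \<Omega>"
    using hs_const[of q] by (rule has_sum_cong[THEN iffD1, rotated])
      (use fold_fixpt[OF tI assms] in \<open>auto simp: string_op_def\<close>)
  thus ?thesis unfolding S_def by (rule infsumI)
qed

lemma Sfix2: assumes xD: "x \<in> D" and Sx: "S x = x" shows "\<And>i. i \<in> I \<Longrightarrow> T i x = x"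
proof -
  define v where "v t = fold T t x - q0" for t
  have h1: "((\<lambda>t. w t *\<^sub>R v t) has_sum (x - q0)) \<Omega>"
    using my_has_sum_diff[OF hs[OF xD] hs_const[of q0]] Sx
    unfolding v_def string_op_def by (simp add: scaleR_diff_right)
  have h2: "((\<lambda>t. inner (w t *\<^sub>R v t) (x - q0)) has_sum inner (x - q0) (x - q0)) \<Omega>"
    using has_sum_bounded_linear[OF bounded_linear_inner_left h1] .
  have h3: "((\<lambda>t. w t * inner (x - q0) (x - q0)) has_sum (1 * inner (x - q0) (x - q0))) \<Omega>"
    by (rule has_sum_cmult_left[OF wsum])
  have h4: "((\<lambda>t. w t * inner (x - q0) (x - q0) - inner (w t *\<^sub>R v t) (x - q0)) has_sum 0) \<Omega>"
    using my_has_sum_diff[OF h3 h2] by simp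
  have vb: "norm (v t) \<le> norm (x - q0)" if t: "t \<in> \<Omega>" for t
    using fold_ne[OF tI[OF t] xD q0D] fold_fixpt[OF tI[OF t] q0fix] unfolding v_def by simp
  have nn: "0 \<le> w t * inner (x - q0) (x - q0) - inner (w t *\<^sub>R v t) (x - q0)" if t: "t \<in> \<Omega>" for t
  proof -
    have "inner (v t) (x - q0) \<le> norm (v t) * norm (x - q0)" by (rule norm_cauchy_schwarz)
    also have "\<dots> \<le> norm (x - q0) * norm (x - q0)" using vb[OF t] by (simp add: mult_right_mono)
    finally have "inner (v t) (x - q0) \<le> inner (x - q0) (x - q0)" by (simp add: dot_square_norm power2_eq_square)
    thus ?thesis using wpos[OF t] by (simp add: mult_left_mono right_diff_distrib[symmetric])
  qed
  have fx: "fold T t x = x" if t: "t \<in> \<Omega>" for t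
  proof -
    have "w t * inner (x - q0) (x - q0) - inner (w t *\<^sub>R v t) (x - q0) = 0"
      by (rule nonneg_has_sum_le_0D[OF h4 order_refl nn t]) (simp add: nn)
    hence "w t * (inner (x - q0) (x - q0) - inner (v t) (x - q0)) = 0" by (simp add: right_diff_distrib)
    hence ip: "inner (v t) (x - q0) = inner (x - q0) (x - q0)" using wpos[OF t] by simp
    have "fold T t x - x = v t - (x - q0)" unfolding v_def by simp
    hence "(norm (fold T t x - x))^2 = (norm (v t))^2 - 2 * inner (v t) (x - q0) + (norm (x - q0))^2"
      by (metis nsq_diff)
    also have "\<dots> \<le> 0" using ip vb[OF t] by (simp add: dot_square_norm power_mono)
    finally show ?thesis by simp
  qed
  fix i assume iI: "i \<in> I"
  then obtain t where t: "t \<in> \<Omega>" "i \<in> set t" using fitI unfolding fit_def by blast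
  have "\<forall>j\<in>set t. T j x = x"
    by (rule fold_fixes[OF tI[OF t(1)] q0D _ xD]) (use q0fix fx[OF t(1)] in auto)
  thus "T i x = x" using t by simp
qed

end

theorem theorem8:
  fixes D :: "'a::{real_inner, complete_space} set"
    and I :: "nat set"
    and T :: "nat \<Rightarrow> 'a \<Rightarrow> 'a"
    and \<Omega> :: "nat list set"
    and w :: "nat list \<Rightarrow> real"
    and lam :: "nat \<Rightarrow> real"
    and u x0 :: 'a
    and x :: "nat \<Rightarrow> 'a"
  assumes "D \<noteq> {}" and "closed D" and "convex D"
    and "I \<subseteq> {0<..}"
    and "\<And>i. i \<in> I \<Longrightarrow> T i ` D \<subseteq> D"
    and "\<And>i. i \<in> I \<Longrightarrow> firmly_nonexpansive_on D (T i)"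
    and "(\<Inter>i\<in>I. Fix_on D (T i)) \<noteq> {}"
    and "M_infty I \<Omega> w"
    and "steering_seq lam"
    and "u \<in> D" and "x0 \<in> D"
    and "x 0 = x0"
    and "\<And>k. x (Suc k) = lam k *\<^sub>R u
            + (1 - lam k) *\<^sub>R (\<Sum>\<^sub>\<infinity>t\<in>\<Omega>. w t *\<^sub>R string_op T t (x k))"
  shows "(\<forall>k. x k \<in> D \<and> (\<lambda>t. w t *\<^sub>R string_op T t (x k)) summable_on \<Omega>)
         \<and> x \<longlonglongrightarrow> metric_proj (\<Inter>i\<in>I. Fix_on D (T i)) u"
proof -
  note A = assms
  define F where "F = (\<Inter>i\<in>I. Fix_on D (T i))"
  obtain q0 where q0F: "q0 \<in> F" using A(7) unfolding F_def by blast
  have fitI: "fit I \<Omega>" and wpos: "\<And>t. t \<in> \<Omega> \<Longrightarrow> 0 < w t" and wsum: "(w has_sum 1) \<Omega>"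
    using A(8) unfolding M_infty_def by auto
  have "I \<noteq> {}"
  proof
    assume "I = {}"
    hence "\<Omega> = {}" using fitI unfolding fit_def by auto
    hence "(w has_sum 0) \<Omega>" by simp
    with wsum show False using has_sum_unique by fastforce
  qed
  then obtain i0 where "i0 \<in> I" by blast
  have q0D: "q0 \<in> D" using q0F \<open>i0 \<in> I\<close> unfolding F_def Fix_on_def by auto
  have q0fix: "\<And>i. i \<in> I \<Longrightarrow> T i q0 = q0" using q0F unfolding F_def Fix_on_def by auto
  interpret ss: ssetup D I T \<Omega> w q0
    by unfold_locales (use A(2,3,5,6) fitI wpos wsum q0D q0fix in auto)
  have rec: "\<And>k. x (Suc k) = lam k *\<^sub>R u + (1 - lam k) *\<^sub>R ss.S (x k)"
    unfolding ss.S_def by (rule A(13))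
  have SDD: "ss.S ` D \<subseteq> D" using ss.SD by auto
  obtain p where pD: "p \<in> D" and Sp: "ss.S p = p"
    and pineq: "\<forall>q\<in>D. ss.S q = q \<longrightarrow> 0 \<le> inner (u - p) (p - q)" and xlim: "x \<longlonglongrightarrow> p"
    using halpern_nonexp[OF A(2) A(3) SDD ss.Sne q0D ss.Sfix[OF q0fix] A(10) A(9), of x] A(11,12) rec
    by auto
  have xD: "x k \<in> D" for k
  proof (induction k)
    case 0 then show ?case using A(11,12) by simp
  next
    case (Suc k)
    have "ss.S (x k) \<in> D" using ss.SD Suc by auto
    moreover have "0 \<le> lam k" "lam k \<le> 1" using A(9) unfolding steering_seq_def by auto
    ultimately show ?case unfolding rec by (intro convexD[OF A(3) A(10)]) auto
  qed
  have Fchar: "q \<in> F \<longleftrightarrow> q \<in> D \<and> ss.S q = q" for q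
  proof
    assume q: "q \<in> F"
    hence "q \<in> D" using \<open>i0 \<in> I\<close> unfolding F_def Fix_on_def by auto
    moreover have "ss.S q = q" by (rule ss.Sfix) (use q in \<open>auto simp: F_def Fix_on_def\<close>)
    ultimately show "q \<in> D \<and> ss.S q = q" by simp
  next
    assume q: "q \<in> D \<and> ss.S q = q"
    hence "\<And>i. i \<in> I \<Longrightarrow> T i q = q" using ss.Sfix2 by blast
    thus "q \<in> F" using q unfolding F_def Fix_on_def by auto
  qed
  have pF: "p \<in> F" using Fchar pD Sp by blast
  have pyth: "(norm (u - p))^2 + (norm (p - q))^2 \<le> (norm (u - q))^2" if "q \<in> F" for q
  proof -
    have "u - q = (u - p) + (p - q)" by simp
    hence "(norm (u - q))^2 = (norm (u - p))^2 + 2 * inner (u - p) (p - q) + (norm (p - q))^2"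
      by (metis nsq_add)
    moreover have "0 \<le> inner (u - p) (p - q)" using pineq Fchar that by blast
    ultimately show ?thesis by linarith
  qed
  have "metric_proj F u = p"
    unfolding metric_proj_def
  proof (rule the_equality)
    show "p \<in> F \<and> (\<forall>y\<in>F. norm (u - p) \<le> norm (u - y))"
    proof (intro conjI ballI pF)
      fix y assume "y \<in> F"
      hence "(norm (u - p))^2 \<le> (norm (u - y))^2" using pyth[of y] by (smt (verit) zero_le_power2)
      thus "norm (u - p) \<le> norm (u - y)" by (rule power2_le_imp_le) simp
    qed
  next
    fix p' assume p': "p' \<in> F \<and> (\<forall>y\<in>F. norm (u - p') \<le> norm (u - y))"
    hence "norm (u - p') \<le> norm (u - p)" using pF by blast
    hence "(norm (u - p'))^2 \<le> (norm (u - p))^2" by (simp add: power_mono)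
    hence "(norm (p - p'))^2 \<le> 0" using pyth[of p'] p' by linarith
    thus "p' = p" by simp
  qed
  thus ?thesis using xD ss.summ xlim unfolding F_def by auto
qed

end
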